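(* Let $\alpha>3/2$, $a(x)=|x|^{-\alpha}$ and $b(x)=\Delta\,a(x)$ for $x\in\mathbb{Z}_{\neq0}$, where $\Delta\in\mathbb{R}\setminus\{0,1,-1\}$. If $K:\mathbb{Z}_{\neq0}\to\mathbb{R}$ is an odd function satisfying $$K(u)a(v)-K(v)a(u)+K(u+v)\bigl(b(u)-b(v)\bigr)=0$$ for all $u,v\in\mathbb{Z}$ with $u,v,u+v\neq0$, then $K\equiv0$.
   Context: Equivalently: for the power-law XXZ chain $\hat H=\sum_{m<n}|m-n|^{-\alpha}\bigl(\hat S^x_m\hat S^x_n+\hat S^y_m\hat S^y_n+\Delta\hat S^z_m\hat S^z_n\bigr)$ with $\Delta\neq0,\pm1$, there is no nonzero conserved two-body operator of the form $\hat K=\sum_{n\in\mathbb{Z},\,r\neq0}K(r)(\hat S^x_n\hat S^y_{n+r}-\hat S^y_n\hat S^x_{n+r})$ with $K$ odd; the displayed functional equation is exactly the condition $[\hat H,\hat K]=0$. *)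

theory Defs
  imports Complex_Main
begin

definition plaw :: "real \<Rightarrow> int \<Rightarrow> real" where
  "plaw \<alpha> x = \<bar>real_of_int x\<bar> powr (- \<alpha>)"

definition plawb :: "real \<Rightarrow> real \<Rightarrow> int \<Rightarrow> real" where
  "plawb \<alpha> \<Delta> x = \<Delta> * plaw \<alpha> x"

end

theory Submission
  imports Defs "HOL-Real_Asymp.Real_Asymp"
begin

theorem mainTheorem5:
  fixes \<alpha> \<Delta> :: real and K :: "int \<Rightarrow> real"
  assumes alpha: "\<alpha> > 3/2"
    and Delta: "\<Delta> \<noteq> 0" "\<Delta> \<noteq> 1" "\<Delta> \<noteq> -1"
    and odd: "\<And>x. x \<noteq> 0 \<Longrightarrow> K (- x) = - K x"
    and eq: "\<And>u v. u \<noteq> 0 \<Longrightarrow> v \<noteq> 0 \<Longrightarrow> u + v \<noteq> 0 \<Longrightarrow>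
       K u * plaw \<alpha> v - K v * plaw \<alpha> u + K (u + v) * (plawb \<alpha> \<Delta> u - plawb \<alpha> \<Delta> v) = 0"
  shows "\<forall>x. x \<noteq> 0 \<longrightarrow> K x = 0"
proof -
  have a1: "plaw \<alpha> 1 = 1" "plaw \<alpha> (-1) = 1" by (simp_all add: plaw_def)
  have A: "K N - K 1 * plaw \<alpha> N + \<Delta> * K (N+1) * (plaw \<alpha> N - 1) = 0" if "N \<ge> 2" for N
    using eq[of N 1] that a1 by (simp add: plawb_def algebra_simps)
  have B: "K (N+1) + K 1 * plaw \<alpha> (N+1) + \<Delta> * K N * (plaw \<alpha> (N+1) - 1) = 0" if "N \<ge> 1" for N
    using eq[of "N+1" "-1"] that a1 odd[of 1] by (simp add: plawb_def algebra_simps)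
  define x where "x n = plaw \<alpha> (int n + 2)" for n
  define y where "y n = plaw \<alpha> (int n + 3)" for n
  define r where "r n = K (int n + 2) / x n" for n
  define p where "p n = y n / x n" for n
  have xe: "x n = (real n + 2) powr (-\<alpha>)" for n by (simp add: x_def plaw_def)
  have ye: "y n = (real n + 3) powr (-\<alpha>)" for n by (simp add: y_def plaw_def)
  have xpos: "x n > 0" for n by (simp add: xe)
  have ypos: "y n > 0" for n by (simp add: ye)
  have elim: "r n * (1 - \<Delta>^2 * (1 - x n) * (1 - y n)) = K 1 * (1 - \<Delta> * (1 - x n) * p n)" for n
  proof -
    let ?k = "K (int n + 2)" and ?k' = "K (int n + 3)"
    have a: "?k - K 1 * x n = \<Delta> * ?k' * (1 - x n)"
      using A[of "int n + 2"] by (simp add: x_def algebra_simps)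
    have b: "?k' = \<Delta> * ?k * (1 - y n) - K 1 * y n"
      using B[of "int n + 2"] by (simp add: y_def algebra_simps)
    have c: "?k * (1 - \<Delta>^2 * (1 - x n) * (1 - y n)) = K 1 * (x n - \<Delta> * (1 - x n) * y n)"
      using a unfolding b by (simp add: algebra_simps power2_eq_square)
    have rk: "?k = r n * x n" using xpos[of n] by (simp add: r_def)
    show ?thesis using c xpos[of n] unfolding rk p_def
      by (simp add: field_simps)
  qed
  have B2: "r (Suc n) = \<Delta> * r n * (1 - y n) / p n - K 1" for n
  proof -
    have b: "K (int n + 3) = \<Delta> * K (int n + 2) * (1 - y n) - K 1 * y n"
      using B[of "int n + 2"] by (simp add: y_def algebra_simps)
    have xs: "x (Suc n) = y n" by (simp add: x_def y_def add.assoc add.commute)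
    have ks: "K (int (Suc n) + 2) = K (int n + 3)" by (simp add: add.assoc add.commute)
    have "r (Suc n) = K (int n + 3) / y n" by (simp only: r_def xs ks)
    moreover have kk: "K (int n + 2) = r n * x n" using xpos[of n] by (simp add: r_def)
    ultimately show ?thesis using b xpos[of n] ypos[of n] unfolding kk by (simp add: p_def field_simps)
  qed
  have al: "-\<alpha> < 0" using alpha by simp
  have xl: "x \<longlonglongrightarrow> 0" unfolding xe
    by (rule tendsto_neg_powr[OF al]) real_asymp
  have yl: "y \<longlonglongrightarrow> 0" unfolding ye
    by (rule tendsto_neg_powr[OF al]) real_asymp
  have pe: "p n = ((real n + 3) / (real n + 2)) powr (-\<alpha>)" for n
    by (simp add: p_def xe ye powr_divide)
  have ql: "(\<lambda>n. (real n + 3) / (real n + 2)) \<longlonglongrightarrow> 1" by real_asymp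
  have pl: "p \<longlonglongrightarrow> 1" unfolding pe
    using tendsto_powr[OF ql tendsto_const[of "-\<alpha>"]] by simp
  have Dl: "(\<lambda>n. 1 - \<Delta>^2 * (1 - x n) * (1 - y n)) \<longlonglongrightarrow> 1 - \<Delta>^2"
    using xl yl by (auto intro!: tendsto_eq_intros)
  have El: "(\<lambda>n. K 1 * (1 - \<Delta> * (1 - x n) * p n)) \<longlonglongrightarrow> K 1 * (1 - \<Delta>)"
    using xl pl by (auto intro!: tendsto_eq_intros)
  have D0: "1 - \<Delta>^2 \<noteq> 0"
  proof
    assume "1 - \<Delta>^2 = 0"
    then have "(1 - \<Delta>) * (1 + \<Delta>) = 0" by (simp add: algebra_simps power2_eq_square)
    then show False using Delta by auto
  qed
  define L where "L = K 1 * (1 - \<Delta>) / (1 - \<Delta>^2)"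
  have rl: "r \<longlonglongrightarrow> L"
  proof -
    have ev: "eventually (\<lambda>n. 1 - \<Delta>^2 * (1 - x n) * (1 - y n) \<noteq> 0) sequentially"
      using tendsto_imp_eventually_ne[OF Dl D0] .
    have "(\<lambda>n. K 1 * (1 - \<Delta> * (1 - x n) * p n) / (1 - \<Delta>^2 * (1 - x n) * (1 - y n))) \<longlonglongrightarrow> L"
      unfolding L_def using tendsto_divide[OF El Dl D0] .
    then show ?thesis
    proof (rule Lim_transform_eventually)
      show "eventually (\<lambda>n. K 1 * (1 - \<Delta> * (1 - x n) * p n) / (1 - \<Delta>^2 * (1 - x n) * (1 - y n)) = r n) sequentially"
        using ev by eventually_elim (simp add: elim[symmetric])
    qed
  qed
  have l1: "(\<lambda>n. r (Suc n)) \<longlonglongrightarrow> L" using rl by (rule LIMSEQ_Suc)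
  have l2: "(\<lambda>n. r (Suc n)) \<longlonglongrightarrow> \<Delta> * L * (1 - 0) / 1 - K 1"
    unfolding B2
    by (rule tendsto_diff[OF tendsto_divide[OF tendsto_mult[OF tendsto_mult[OF tendsto_const rl] tendsto_diff[OF tendsto_const yl]] pl] tendsto_const]) simp
  have LL: "L = \<Delta> * L - K 1" using LIMSEQ_unique[OF l1 l2] by simp
  have K1: "K 1 = 0"
  proof -
    have e1: "L * (1 - \<Delta>^2) = K 1 * (1 - \<Delta>)" using D0 by (simp add: L_def)
    have e2: "L * (1 - \<Delta>) = - K 1" using LL by (simp add: algebra_simps)
    have "K 1 * (1 - \<Delta>) = L * (1 - \<Delta>^2)" using e1 by simp
    also have "\<dots> = (L * (1 - \<Delta>)) * (1 + \<Delta>)"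
      by (simp add: algebra_simps power2_eq_square)
    also have "\<dots> = - K 1 * (1 + \<Delta>)" by (simp only: e2)
    finally have "K 1 * (1 - \<Delta>) = - K 1 * (1 + \<Delta>)" .
    then have "K 1 * 2 = 0" by (simp add: algebra_simps)
    then show ?thesis by simp
  qed
  have pos: "K (int n + 1) = 0" for n
  proof (induction n)
    case 0 then show ?case using K1 by simp
  next
    case (Suc n)
    have "K (int n + 1 + 1) = 0" using B[of "int n + 1"] Suc K1 by simp
    then show ?case by (simp add: add.assoc add.commute)
  qed
  show ?thesis
  proof (intro allI impI)
    fix z :: int assume z: "z \<noteq> 0"
    show "K z = 0"
    proof (cases "z > 0")
      case True
      then have "z = int (nat (z - 1)) + 1" by simp
      then show ?thesis using pos by metis
    next
      case False
      then have "- z = int (nat (- z - 1)) + 1" using z by simp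
      then have "K (- z) = 0" using pos by metis
      then show ?thesis using odd[OF z] by simp
    qed
  qed
qed

end
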